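(* Let $\Pi$ be a finite, satisfiable set of linear constraints over the variables $x_1,\dots,x_D$ (each of the form $\sum_k w_k x_k + b \unrhd 0$ with $\unrhd\in\{\ge,>\}$), and let $\mathrm{CL}$ be the constraint layer built from $\Pi$ and the variable ordering $x_1,\dots,x_D$ as described in the context. Then for every sample $\tilde x\in\mathbb{R}^D$ (and every admissible choice of the $\epsilon$ values), $\mathrm{CL}(\tilde x)$ satisfies every constraint in $\Pi$. Consequently, for any generative model $m$ producing samples in $\mathbb{R}^D$, the model C-$m$ obtained by applying $\mathrm{CL}$ to every output of $m$ is compliant with $\Pi$, i.e. all samples it generates satisfy $\Pi$.
   Context: A constraint is a linear inequality $\phi:\ \sum_{k=1}^D w_k x_k + b \unrhd 0$ with $w_k,b\in\mathbb{R}$ and $\unrhd\in\{\ge,>\}$; it is strict if $\unrhd$ is $>$. A point $\tilde x\in\mathbb{R}^D$ satisfies $\phi$ if $\sum_k w_k\tilde x_k+b\unrhd 0$, and satisfies a set $\Pi$ if it satisfies every member; $\Pi$ is satisfiable if some point satisfies it. Variable $x_j$ appears positively (resp. negatively) in $\phi$ if $w_j>0$ (resp. $w_j<0$). For a set $\Gamma$ of constraints, $\Gamma^+_j$ (resp. $\Gamma^-_j$) is the subset in which $x_j$ appears positively (resp. negatively). Reduction: for $\phi^1=\sum_k w^1_kx_k+b^1\unrhd^1 0\in\Gamma^-_j$ and $\phi^2=\sum_k w^2_kx_k+b^2\unrhd^2 0\in\Gamma^+_j$, $red_j(\phi^1,\phi^2)$ is $\sum_{k\ne j}(w^1_k|w^2_j|+w^2_k|w^1_j|)x_k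 + b^1|w^2_j|+b^2|w^1_j| \unrhd 0$, where $\unrhd$ is $\ge$ if both $\unrhd^1,\unrhd^2$ are $\ge$, and $>$ otherwise. Sets $\Pi_i$: $\Pi_D=\Pi$, and for $i<D$, with $j=i+1$, $\Pi_i=(\Pi_j\setminus(\Pi^-_j\cup\Pi^+_j))\cup\{red_j(\phi^1,\phi^2):\phi^1\in\Pi^-_j,\phi^2\in\Pi^+_j\}$, where $\Pi^\pm_j$ means $(\Pi_j)^\pm_j$. (Thus only $x_1,\dots,x_i$ occur in $\Pi_i$; we write $\Pi_i^\pm$ for $(\Pi_i)^\pm_i$.) For $\phi=\sum_kw_kx_k+b\unrhd0$ with $w_i\neq0$, let $\varepsilon^\phi_i=-\sum_{k\ne i}(w_k/w_i)x_k-b/w_i$; for $\phi\in\Pi_i$ it depends only on $x_1,\dots,x_{i-1}$, and $\phi\in\Pi_i^+$ is equivalent to $x_i-\varepsilon_i^\phi\unrhd0$, $\phi\in\Pi_i^-$ to $\varepsilon_i^\phi - x_i\unrhd 0$. Constraint layer: given $\tilde x\in\mathbb{R}^D$, $\mathrm{CL}(\tilde x)\in\mathbb{R}^D$ is computed coordinatewise for $i=1,\dots,D$. Let $\varepsilon^\phi_i(\mathrm{CL}(\tilde x))$ denote $\varepsilon^\phi_i$ evaluated at the already computed values $\mathrm{CL}(\tilde x)_1,\dots,\mathrm{CL}(\tilde x)_{i-1}$, and set $ub_i=\min\{\varepsilon^\phi_i(\mathrm{CL}(\tilde x)):\phi\in\Pi_i^-\}$, $lb_i=\max\{\varepsilon^\phi_i(\mathrm{CL}(\tilde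 x)):\phi\in\Pi_i^+\}$ (with $\min\emptyset=+\infty$, $\max\emptyset=-\infty$). Then $\mathrm{CL}(\tilde x)_i=\min^i(\max^i(\tilde x_i,lb_i),ub_i)$, where $\max^i(a,lb_i)$ equals $v=\max(a,lb_i)$ unless some strict $\phi\in\Pi_i^+$ has $v=\varepsilon^\phi_i(\mathrm{CL}(\tilde x))$, in which case it equals $v+\epsilon$ for a chosen $\epsilon>0$ small enough that $lb_i+\epsilon< ub_i$; symmetrically $\min^i(a,ub_i)$ equals $u=\min(a,ub_i)$ unless some strict $\phi\in\Pi_i^-$ has $u=\varepsilon^\phi_i(\mathrm{CL}(\tilde x))$, in which case it equals $u-\epsilon$ for a chosen $\epsilon>0$ small enough that $ub_i-\epsilon>lb_i$. The chosen positive numbers are called the $\epsilon$ values used to compute $\mathrm{CL}(\tilde x)$. *)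

theory Defs
  imports Complex_Main "HOL-Library.Extended_Real"
begin

(* A linear constraint  sum_k w_k x_k + b |> 0  over variables x_1..x_D.
   Points of R^D are functions nat => real; only coordinates 1..D matter. *)
record lcons =
  wt :: "nat \<Rightarrow> real"
  bias :: real
  strict :: bool

definition lval :: "nat \<Rightarrow> lcons \<Rightarrow> (nat \<Rightarrow> real) \<Rightarrow> real" where
  "lval D \<phi> x = (\<Sum>k=1..D. wt \<phi> k * x k) + bias \<phi>"

definition sat :: "nat \<Rightarrow> (nat \<Rightarrow> real) \<Rightarrow> lcons \<Rightarrow> bool" where
  "sat D x \<phi> \<longleftrightarrow> (if strict \<phi> then lval D \<phi> x > 0 else lval D \<phi> x \<ge> 0)"

definition sat_set :: "nat \<Rightarrow> (nat \<Rightarrow> real) \<Rightarrow> lcons set \<Rightarrow> bool" where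
  "sat_set D x \<Pi> \<longleftrightarrow> (\<forall>\<phi>\<in>\<Pi>. sat D x \<phi>)"

definition satisfiable :: "nat \<Rightarrow> lcons set \<Rightarrow> bool" where
  "satisfiable D \<Pi> \<longleftrightarrow> (\<exists>x. sat_set D x \<Pi>)"

definition posset :: "nat \<Rightarrow> lcons set \<Rightarrow> lcons set" where
  "posset j \<Gamma> = {\<phi>\<in>\<Gamma>. wt \<phi> j > 0}"

definition negset :: "nat \<Rightarrow> lcons set \<Rightarrow> lcons set" where
  "negset j \<Gamma> = {\<phi>\<in>\<Gamma>. wt \<phi> j < 0}"

(* red_j(phi1, phi2), phi1 in Gamma^-_j, phi2 in Gamma^+_j *)
definition red :: "nat \<Rightarrow> lcons \<Rightarrow> lcons \<Rightarrow> lcons" where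
  "red j \<phi>1 \<phi>2 =
     \<lparr> wt = (\<lambda>k. if k = j then 0
                   else wt \<phi>1 k * \<bar>wt \<phi>2 j\<bar> + wt \<phi>2 k * \<bar>wt \<phi>1 j\<bar>),
       bias = bias \<phi>1 * \<bar>wt \<phi>2 j\<bar> + bias \<phi>2 * \<bar>wt \<phi>1 j\<bar>,
       strict = (strict \<phi>1 \<or> strict \<phi>2) \<rparr>"

definition elim :: "nat \<Rightarrow> lcons set \<Rightarrow> lcons set" where
  "elim j \<Gamma> = (\<Gamma> - (negset j \<Gamma> \<union> posset j \<Gamma>))
      \<union> {red j \<phi>1 \<phi>2 | \<phi>1 \<phi>2. \<phi>1 \<in> negset j \<Gamma> \<and> \<phi>2 \<in> posset j \<Gamma>}"

(* elimsteps D Pi n = Pi_{D-n} *)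
fun elimsteps :: "nat \<Rightarrow> lcons set \<Rightarrow> nat \<Rightarrow> lcons set" where
  "elimsteps D \<Pi> 0 = \<Pi>"
| "elimsteps D \<Pi> (Suc n) = elim (D - n) (elimsteps D \<Pi> n)"

definition PiSet :: "nat \<Rightarrow> lcons set \<Rightarrow> nat \<Rightarrow> lcons set" where
  "PiSet D \<Pi> i = elimsteps D \<Pi> (D - i)"

definition epsv :: "nat \<Rightarrow> lcons \<Rightarrow> (nat \<Rightarrow> real) \<Rightarrow> real" where
  "epsv i \<phi> y = - (\<Sum>k\<in>{1..<i}. (wt \<phi> k / wt \<phi> i) * y k) - bias \<phi> / wt \<phi> i"

(* lb_i and ub_i (max {} = -inf, min {} = +inf) *)
definition lbnd :: "nat \<Rightarrow> lcons set \<Rightarrow> nat \<Rightarrow> (nat \<Rightarrow> real) \<Rightarrow> ereal" where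
  "lbnd D \<Pi> i y = Sup ((\<lambda>\<phi>. ereal (epsv i \<phi> y)) ` posset i (PiSet D \<Pi> i))"

definition ubnd :: "nat \<Rightarrow> lcons set \<Rightarrow> nat \<Rightarrow> (nat \<Rightarrow> real) \<Rightarrow> ereal" where
  "ubnd D \<Pi> i y = Inf ((\<lambda>\<phi>. ereal (epsv i \<phi> y)) ` negset i (PiSet D \<Pi> i))"

(* r is an admissible value of max^i(a, lb_i), given computed values y_1..y_{i-1} *)
definition maxi_ok :: "nat \<Rightarrow> lcons set \<Rightarrow> nat \<Rightarrow> (nat \<Rightarrow> real) \<Rightarrow> real \<Rightarrow> real \<Rightarrow> bool" where
  "maxi_ok D \<Pi> i y a r \<longleftrightarrow>
     (let lb = lbnd D \<Pi> i y; ub = ubnd D \<Pi> i y;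
          v = real_of_ereal (max (ereal a) lb) in
      if (\<exists>\<phi>\<in>posset i (PiSet D \<Pi> i). strict \<phi> \<and> v = epsv i \<phi> y)
      then (\<exists>e>0. lb + ereal e < ub \<and> r = v + e)
      else r = v)"

(* r is an admissible value of min^i(a, ub_i), given computed values y_1..y_{i-1} *)
definition mini_ok :: "nat \<Rightarrow> lcons set \<Rightarrow> nat \<Rightarrow> (nat \<Rightarrow> real) \<Rightarrow> real \<Rightarrow> real \<Rightarrow> bool" where
  "mini_ok D \<Pi> i y a r \<longleftrightarrow>
     (let lb = lbnd D \<Pi> i y; ub = ubnd D \<Pi> i y;
          u = real_of_ereal (min (ereal a) ub) in
      if (\<exists>\<phi>\<in>negset i (PiSet D \<Pi> i). strict \<phi> \<and> u = epsv i \<phi> y)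
      then (\<exists>e>0. ub - ereal e > lb \<and> r = u - e)
      else r = u)"

(* y is CL(xt) for some admissible choice of the epsilon values *)
definition is_CL :: "nat \<Rightarrow> lcons set \<Rightarrow> (nat \<Rightarrow> real) \<Rightarrow> (nat \<Rightarrow> real) \<Rightarrow> bool" where
  "is_CL D \<Pi> xt y \<longleftrightarrow>
     (\<forall>i\<in>{1..D}. \<exists>r. maxi_ok D \<Pi> i y (xt i) r \<and> mini_ok D \<Pi> i y r (y i))"

(* a generative model, viewed as a map from its source of randomness to samples,
   is compliant with Pi if all samples it generates satisfy Pi *)
definition compliant :: "nat \<Rightarrow> lcons set \<Rightarrow> ('w \<Rightarrow> (nat \<Rightarrow> real)) \<Rightarrow> bool" where
  "compliant D \<Pi> m \<longleftrightarrow> (\<forall>s\<in>range m. sat_set D s \<Pi>)"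

end

theory Submission imports Defs begin

lemma zero_wt:
  "n \<le> D \<Longrightarrow> \<phi> \<in> elimsteps D \<Pi> n \<Longrightarrow> D - n < k \<Longrightarrow> k \<le> D \<Longrightarrow> wt \<phi> k = 0"
proof (induction n arbitrary: \<phi>)
  case 0
  then show ?case by simp
next
  case (Suc n)
  let ?G = "elimsteps D \<Pi> n"
  have IH: "\<And>\<psi>. \<psi> \<in> ?G \<Longrightarrow> D - n < k \<Longrightarrow> wt \<psi> k = 0" using Suc by auto
  from Suc.prems(2) have "\<phi> \<in> elim (D - n) ?G" by simp
  then consider (keep) "\<phi> \<in> ?G" "wt \<phi> (D - n) = 0"
    | (red) \<phi>1 \<phi>2 where "\<phi> = red (D - n) \<phi>1 \<phi>2" "\<phi>1 \<in> ?G" "\<phi>2 \<in> ?G"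
    unfolding elim_def negset_def posset_def by (auto simp: not_less_iff_gr_or_eq)
  then show ?case
  proof cases
    case keep
    then show ?thesis using IH Suc.prems by (cases "k = D - n") auto
  next
    case red
    then show ?thesis using IH Suc.prems by (cases "k = D - n") (auto simp: red_def)
  qed
qed

lemma zero_wt_Pi:
  "m \<le> D \<Longrightarrow> \<phi> \<in> PiSet D \<Pi> m \<Longrightarrow> m < k \<Longrightarrow> k \<le> D \<Longrightarrow> wt \<phi> k = 0"
  unfolding PiSet_def by (rule zero_wt) auto

lemma lval_agree:
  assumes "m \<le> D" "\<phi> \<in> PiSet D \<Pi> m" "\<And>k. 1 \<le> k \<Longrightarrow> k \<le> m \<Longrightarrow> y k = y' k"
  shows "lval D \<phi> y = lval D \<phi> y'"
proof -
  have "(\<Sum>k=1..D. wt \<phi> k * y k) = (\<Sum>k=1..D. wt \<phi> k * y' k)"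
  proof (rule sum.cong)
    fix k assume "k \<in> {1..D}"
    then show "wt \<phi> k * y k = wt \<phi> k * y' k"
      using assms zero_wt_Pi[OF assms(1,2), of k] by (cases "k \<le> m") auto
  qed simp
  then show ?thesis by (simp add: lval_def)
qed

lemma lval_epsv:
  assumes "1 \<le> i" "i \<le> D" "\<phi> \<in> PiSet D \<Pi> i" "wt \<phi> i \<noteq> 0"
  shows "lval D \<phi> y = wt \<phi> i * (y i - epsv i \<phi> y)"
proof -
  have "(\<Sum>k=1..D. wt \<phi> k * y k) = (\<Sum>k=1..i. wt \<phi> k * y k)"
    by (rule sum.mono_neutral_right) (use assms zero_wt_Pi[OF assms(2,3)] in auto)
  also have "{1..i} = insert i {1..<i}" using assms by auto
  hence "(\<Sum>k=1..i. wt \<phi> k * y k) = wt \<phi> i * y i + (\<Sum>k\<in>{1..<i}. wt \<phi> k * y k)" by simp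
  also have "(\<Sum>k\<in>{1..<i}. wt \<phi> k * y k) = wt \<phi> i * (\<Sum>k\<in>{1..<i}. wt \<phi> k / wt \<phi> i * y k)"
    using assms(4) by (simp add: sum_distrib_left)
  finally show ?thesis using assms(4) unfolding lval_def epsv_def by (simp add: algebra_simps)
qed

lemma lval_red:
  assumes "wt \<phi>1 j < 0" "wt \<phi>2 j > 0"
  shows "lval D (red j \<phi>1 \<phi>2) y = \<bar>wt \<phi>2 j\<bar> * lval D \<phi>1 y + \<bar>wt \<phi>1 j\<bar> * lval D \<phi>2 y"
proof -
  have hw: "\<And>k. wt (red j \<phi>1 \<phi>2) k = wt \<phi>1 k * \<bar>wt \<phi>2 j\<bar> + wt \<phi>2 k * \<bar>wt \<phi>1 j\<bar>"
    using assms by (auto simp: red_def)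
  show ?thesis unfolding lval_def hw
    by (simp add: algebra_simps sum.distrib sum_distrib_left red_def)
qed

lemma sat_red:
  assumes "wt \<phi>1 j < 0" "wt \<phi>2 j > 0" "sat D y \<phi>1" "sat D y \<phi>2"
  shows "sat D y (red j \<phi>1 \<phi>2)"
proof -
  have c1: "\<bar>wt \<phi>1 j\<bar> > 0" "\<bar>wt \<phi>2 j\<bar> > 0" using assms by auto
  have l1: "lval D \<phi>1 y \<ge> 0" "strict \<phi>1 \<Longrightarrow> lval D \<phi>1 y > 0" using assms(3) by (auto simp: sat_def split: if_splits)
  have l2: "lval D \<phi>2 y \<ge> 0" "strict \<phi>2 \<Longrightarrow> lval D \<phi>2 y > 0" using assms(4) by (auto simp: sat_def split: if_splits)
  have a: "\<bar>wt \<phi>2 j\<bar> * lval D \<phi>1 y \<ge> 0" "\<bar>wt \<phi>1 j\<bar> * lval D \<phi>2 y \<ge> 0"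
    using c1 l1 l2 by auto
  have b: "strict \<phi>1 \<Longrightarrow> \<bar>wt \<phi>2 j\<bar> * lval D \<phi>1 y > 0" "strict \<phi>2 \<Longrightarrow> \<bar>wt \<phi>1 j\<bar> * lval D \<phi>2 y > 0"
    using c1 l1 l2 by auto
  show ?thesis unfolding sat_def lval_red[OF assms(1,2)] using a b
    by (auto simp: red_def)
qed

lemma finite_elim: "finite \<Gamma> \<Longrightarrow> finite (elim j \<Gamma>)"
proof -
  assume f: "finite \<Gamma>"
  have "{red j \<phi>1 \<phi>2 | \<phi>1 \<phi>2. \<phi>1 \<in> negset j \<Gamma> \<and> \<phi>2 \<in> posset j \<Gamma>} \<subseteq> (\<lambda>(a,b). red j a b) ` (\<Gamma> \<times> \<Gamma>)"
    by (auto simp: negset_def posset_def)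
  moreover have "finite ((\<lambda>(a,b). red j a b) ` (\<Gamma> \<times> \<Gamma>))" using f by auto
  ultimately show ?thesis using f unfolding elim_def by (meson finite_Diff finite_UnI finite_subset)
qed

lemma finite_PiSet: "finite \<Pi> \<Longrightarrow> finite (PiSet D \<Pi> m)"
proof -
  assume f: "finite \<Pi>"
  have "finite (elimsteps D \<Pi> n)" for n by (induction n) (use f finite_elim in auto)
  then show ?thesis by (simp add: PiSet_def)
qed

lemma sat_elim: "sat_set D x \<Gamma> \<Longrightarrow> sat_set D x (elim j \<Gamma>)"
  unfolding sat_set_def elim_def by (auto simp: negset_def posset_def intro: sat_red)

lemma PiSet_step: "1 \<le> i \<Longrightarrow> i \<le> D \<Longrightarrow> PiSet D \<Pi> (i - 1) = elim i (PiSet D \<Pi> i)"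
proof -
  assume a: "1 \<le> i" "i \<le> D"
  have "D - (i - 1) = Suc (D - i)" using a by arith
  moreover have "D - (D - i) = i" using a by arith
  ultimately show ?thesis by (simp add: PiSet_def)
qed

lemma PiSet_D: "PiSet D \<Pi> D = \<Pi>" by (simp add: PiSet_def)

lemma base_sat:
  assumes "satisfiable D \<Pi>"
  shows "sat_set D y (PiSet D \<Pi> 0)"
proof -
  obtain x where x: "sat_set D x \<Pi>" using assms by (auto simp: satisfiable_def)
  have "sat_set D x (elimsteps D \<Pi> n)" for n by (induction n) (use x sat_elim in auto)
  hence sx: "sat_set D x (PiSet D \<Pi> 0)" by (simp add: PiSet_def)
  show ?thesis unfolding sat_set_def
  proof
    fix \<phi> assume p: "\<phi> \<in> PiSet D \<Pi> 0"
    have "lval D \<phi> y = lval D \<phi> x" by (rule lval_agree[OF _ p]) auto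
    then show "sat D y \<phi>" using sx p by (auto simp: sat_set_def sat_def)
  qed
qed


definition mx_ok :: "lcons set \<Rightarrow> lcons set \<Rightarrow> (lcons \<Rightarrow> real) \<Rightarrow> real \<Rightarrow> real \<Rightarrow> bool" where
 "mx_ok P N f a r \<longleftrightarrow> (let lb = Sup ((\<lambda>\<phi>. ereal (f \<phi>)) ` P); ub = Inf ((\<lambda>\<phi>. ereal (f \<phi>)) ` N);
     v = real_of_ereal (max (ereal a) lb) in
   if (\<exists>\<phi>\<in>P. strict \<phi> \<and> v = f \<phi>) then (\<exists>e>0. lb + ereal e < ub \<and> r = v + e) else r = v)"

definition mn_ok :: "lcons set \<Rightarrow> lcons set \<Rightarrow> (lcons \<Rightarrow> real) \<Rightarrow> real \<Rightarrow> real \<Rightarrow> bool" where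
 "mn_ok P N f a r \<longleftrightarrow> (let lb = Sup ((\<lambda>\<phi>. ereal (f \<phi>)) ` P); ub = Inf ((\<lambda>\<phi>. ereal (f \<phi>)) ` N);
     u = real_of_ereal (min (ereal a) ub) in
   if (\<exists>\<phi>\<in>N. strict \<phi> \<and> u = f \<phi>) then (\<exists>e>0. ub - ereal e > lb \<and> r = u - e) else r = u)"

lemma maxi_ok_mx: "maxi_ok D \<Pi> i y a r = mx_ok (posset i (PiSet D \<Pi> i)) (negset i (PiSet D \<Pi> i)) (\<lambda>\<phi>. epsv i \<phi> y) a r"
  by (simp add: maxi_ok_def mx_ok_def lbnd_def ubnd_def)

lemma mini_ok_mn: "mini_ok D \<Pi> i y a r = mn_ok (posset i (PiSet D \<Pi> i)) (negset i (PiSet D \<Pi> i)) (\<lambda>\<phi>. epsv i \<phi> y) a r"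
  by (simp add: mini_ok_def mn_ok_def lbnd_def ubnd_def)

lemma sup_rep:
  fixes f :: "lcons \<Rightarrow> real"
  assumes "finite P" "P \<noteq> {}"
  shows "\<exists>p\<in>P. (\<forall>\<phi>\<in>P. f \<phi> \<le> f p) \<and> Sup ((\<lambda>\<phi>. ereal (f \<phi>)) ` P) = ereal (f p)"
proof -
  have "Max (f ` P) \<in> f ` P" using assms by simp
  then obtain p where p: "p \<in> P" "f p = Max (f ` P)" by auto
  have le: "\<forall>\<phi>\<in>P. f \<phi> \<le> f p" using p assms by simp
  have "Sup ((\<lambda>\<phi>. ereal (f \<phi>)) ` P) = ereal (f p)"
    by (rule antisym) (use le p in \<open>auto intro!: SUP_least SUP_upper2\<close>)
  then show ?thesis using p le by blast
qed

lemma inf_rep: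
  fixes f :: "lcons \<Rightarrow> real"
  assumes "finite P" "P \<noteq> {}"
  shows "\<exists>p\<in>P. (\<forall>\<phi>\<in>P. f p \<le> f \<phi>) \<and> Inf ((\<lambda>\<phi>. ereal (f \<phi>)) ` P) = ereal (f p)"
proof -
  have "Min (f ` P) \<in> f ` P" using assms by simp
  then obtain p where p: "p \<in> P" "f p = Min (f ` P)" by auto
  have le: "\<forall>\<phi>\<in>P. f p \<le> f \<phi>" using p assms by simp
  have "Inf ((\<lambda>\<phi>. ereal (f \<phi>)) ` P) = ereal (f p)"
    by (rule antisym) (use le p in \<open>auto intro!: INF_greatest INF_lower2\<close>)
  then show ?thesis using p le by blast
qed


locale odim =
  fixes P N :: "lcons set" and f :: "lcons \<Rightarrow> real"
  assumes finP: "finite P" and finN: "finite N"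
  and H: "\<And>\<phi> \<psi>. \<phi>\<in>P \<Longrightarrow> \<psi>\<in>N \<Longrightarrow> f \<phi> \<le> f \<psi> \<and> (strict \<phi> \<or> strict \<psi> \<longrightarrow> f \<phi> < f \<psi>)"
begin

definition "lb = Sup ((\<lambda>\<phi>. ereal (f \<phi>)) ` P)"
definition "ub = Inf ((\<lambda>\<phi>. ereal (f \<phi>)) ` N)"

lemma lbP: "\<phi>\<in>P \<Longrightarrow> ereal (f \<phi>) \<le> lb" unfolding lb_def by (rule SUP_upper)
lemma ubN: "\<psi>\<in>N \<Longrightarrow> ub \<le> ereal (f \<psi>)" unfolding ub_def by (rule INF_lower)

lemma lb_cases: "(P = {} \<and> lb = -\<infinity>) \<or> (\<exists>p\<in>P. (\<forall>\<phi>\<in>P. f \<phi> \<le> f p) \<and> lb = ereal (f p))"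
  using sup_rep[OF finP, of f] unfolding lb_def by (cases "P = {}") (auto simp: bot_ereal_def)

lemma ub_cases: "(N = {} \<and> ub = \<infinity>) \<or> (\<exists>p\<in>N. (\<forall>\<phi>\<in>N. f p \<le> f \<phi>) \<and> ub = ereal (f p))"
  using inf_rep[OF finN, of f] unfolding ub_def by (cases "N = {}") (auto simp: top_ereal_def)

lemma lb_ninf: "lb \<noteq> \<infinity>" using lb_cases by auto
lemma ub_nminf: "ub \<noteq> -\<infinity>" using ub_cases by auto

lemma max_real: "ereal (real_of_ereal (max (ereal a) lb)) = max (ereal a) lb"
  using lb_ninf by (cases lb) (auto simp: max_def)

lemma min_real: "ereal (real_of_ereal (min (ereal a) ub)) = min (ereal a) ub"
  using ub_nminf by (cases ub) (auto simp: min_def)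

lemma mx_unf: "mx_ok P N f a r \<longleftrightarrow> (let v = real_of_ereal (max (ereal a) lb) in
   if (\<exists>\<phi>\<in>P. strict \<phi> \<and> v = f \<phi>) then (\<exists>e>0. lb + ereal e < ub \<and> r = v + e) else r = v)"
  by (simp only: mx_ok_def lb_def ub_def Let_def)

lemma mn_unf: "mn_ok P N f a r \<longleftrightarrow> (let u = real_of_ereal (min (ereal a) ub) in
   if (\<exists>\<phi>\<in>N. strict \<phi> \<and> u = f \<phi>) then (\<exists>e>0. ub - ereal e > lb \<and> r = u - e) else r = u)"
  by (simp only: mn_ok_def lb_def ub_def Let_def)

lemma sound:
  assumes mx: "mx_ok P N f a r" and mn: "mn_ok P N f r t"
  shows "(\<forall>\<phi>\<in>P. f \<phi> \<le> t \<and> (strict \<phi> \<longrightarrow> f \<phi> < t)) \<and> (\<forall>\<psi>\<in>N. t \<le> f \<psi> \<and> (strict \<psi> \<longrightarrow> t < f \<psi>))"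
proof -
  define v where "v = real_of_ereal (max (ereal a) lb)"
  have ev: "ereal v = max (ereal a) lb" unfolding v_def by (rule max_real)
  have fv: "\<phi>\<in>P \<Longrightarrow> f \<phi> \<le> v" for \<phi>
  proof -
    assume "\<phi>\<in>P" hence "ereal (f \<phi>) \<le> ereal v" using lbP ev by (metis max.coboundedI2)
    thus ?thesis by simp
  qed
  have A: "\<forall>\<phi>\<in>P. f \<phi> \<le> r \<and> (strict \<phi> \<longrightarrow> f \<phi> < r)"
    using mx fv unfolding mx_unf v_def[symmetric] Let_def
    by (auto split: if_splits) (smt (verit, best))+
  define u where "u = real_of_ereal (min (ereal r) ub)"
  have eu: "ereal u = min (ereal r) ub" unfolding u_def by (rule min_real)
  have uN: "\<psi>\<in>N \<Longrightarrow> u \<le> f \<psi>" for \<psi>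
  proof -
    assume "\<psi>\<in>N" hence "ereal u \<le> ereal (f \<psi>)" using ubN eu by (metis min.coboundedI2)
    thus ?thesis by simp
  qed
  show ?thesis
  proof (cases "\<exists>\<phi>\<in>N. strict \<phi> \<and> u = f \<phi>")
    case True
    then obtain \<psi>0 where p0: "\<psi>0 \<in> N" "strict \<psi>0" "u = f \<psi>0" by auto
    from True mn obtain e where e: "e > 0" "ub - ereal e > lb" "t = u - e"
      unfolding mn_unf u_def[symmetric] Let_def by auto
    have "ereal u \<le> ub" using eu by simp
    moreover have "ub \<le> ereal u" using ubN[OF p0(1)] p0(3) by simp
    ultimately have ubu: "ub = ereal u" by simp
    have "lb < ereal t" using e ubu by simp
    hence P: "\<forall>\<phi>\<in>P. f \<phi> < t" using lbP by (meson le_less_trans less_ereal.simps(1))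
    have "\<forall>\<psi>\<in>N. t < f \<psi>" using uN e by force
    then show ?thesis using P by auto
  next
    case False
    hence tu: "t = u" using mn unfolding mn_unf u_def[symmetric] Let_def by auto
    have Nside: "\<forall>\<psi>\<in>N. t \<le> f \<psi> \<and> (strict \<psi> \<longrightarrow> t < f \<psi>)"
      using False uN tu by force
    have Pside: "\<forall>\<phi>\<in>P. f \<phi> \<le> t \<and> (strict \<phi> \<longrightarrow> f \<phi> < t)"
    proof (cases "ereal r \<le> ub")
      case True
      hence "u = r" using eu by (simp add: min_def)
      then show ?thesis using A tu by simp
    next
      case False
      hence "ereal u = ub" using eu by simp
      moreover from False ub_cases obtain n0 where "n0 \<in> N" "ub = ereal (f n0)" by auto
      ultimately show ?thesis using H tu by auto
    qed
    show ?thesis using Nside Pside by blast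
  qed
qed

lemma exists: "\<exists>r t. mx_ok P N f a r \<and> mn_ok P N f r t"
proof -
  define v where "v = real_of_ereal (max (ereal a) lb)"
  have ev: "ereal v = max (ereal a) lb" unfolding v_def by (rule max_real)
  have "\<exists>r. mx_ok P N f a r"
  proof (cases "\<exists>\<phi>\<in>P. strict \<phi> \<and> v = f \<phi>")
    case True
    then obtain \<phi>0 where p0: "\<phi>0 \<in> P" "strict \<phi>0" "v = f \<phi>0" by auto
    have "lb \<le> ereal v" using ev by simp
    moreover have "ereal v \<le> lb" using lbP[OF p0(1)] p0(3) by simp
    ultimately have lbv: "lb = ereal v" by simp
    have "\<exists>e>0. lb + ereal e < ub"
    proof (cases "N = {}")
      case True
      hence "ub = \<infinity>" using ub_cases by auto
      then show ?thesis using lbv by (intro exI[of _ 1]) auto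
    next
      case False
      then obtain n0 where n0: "n0 \<in> N" "ub = ereal (f n0)" using ub_cases by auto
      have "v < f n0" using H[OF p0(1) n0(1)] p0 by auto
      then show ?thesis using lbv n0 by (intro exI[of _ "(f n0 - v)/2"]) (auto simp: field_simps)
    qed
    then show ?thesis using True unfolding mx_unf v_def[symmetric] Let_def by auto
  next
    case False
    then show ?thesis unfolding mx_unf v_def[symmetric] Let_def by auto
  qed
  then obtain r where r: "mx_ok P N f a r" by auto
  define u where "u = real_of_ereal (min (ereal r) ub)"
  have eu: "ereal u = min (ereal r) ub" unfolding u_def by (rule min_real)
  have "\<exists>t. mn_ok P N f r t"
  proof (cases "\<exists>\<phi>\<in>N. strict \<phi> \<and> u = f \<phi>")
    case True
    then obtain \<psi>0 where p0: "\<psi>0 \<in> N" "strict \<psi>0" "u = f \<psi>0" by auto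
    have "ereal u \<le> ub" using eu by simp
    moreover have "ub \<le> ereal u" using ubN[OF p0(1)] p0(3) by simp
    ultimately have ubu: "ub = ereal u" by simp
    have "\<exists>e>0. ub - ereal e > lb"
    proof (cases "P = {}")
      case True
      hence "lb = -\<infinity>" using lb_cases by auto
      then show ?thesis using ubu by (intro exI[of _ 1]) auto
    next
      case False
      then obtain p where p: "p \<in> P" "lb = ereal (f p)" using lb_cases by auto
      have "f p < u" using H[OF p(1) p0(1)] p0 by auto
      then show ?thesis using ubu p by (intro exI[of _ "(u - f p)/2"]) (auto simp: field_simps)
    qed
    then show ?thesis using True unfolding mn_unf u_def[symmetric] Let_def by auto
  next
    case False
    then show ?thesis unfolding mn_unf u_def[symmetric] Let_def by auto
  qed
  then show ?thesis using r by auto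
qed

end


lemma H_lemma:
  assumes i: "1 \<le> i" "i \<le> D" and s: "sat_set D y (PiSet D \<Pi> (i - 1))"
    and p: "\<phi> \<in> posset i (PiSet D \<Pi> i)" and n: "\<psi> \<in> negset i (PiSet D \<Pi> i)"
  shows "epsv i \<phi> y \<le> epsv i \<psi> y \<and> (strict \<phi> \<or> strict \<psi> \<longrightarrow> epsv i \<phi> y < epsv i \<psi> y)"
proof -
  have wp: "wt \<phi> i > 0" "\<phi> \<in> PiSet D \<Pi> i" using p by (auto simp: posset_def)
  have wn: "wt \<psi> i < 0" "\<psi> \<in> PiSet D \<Pi> i" using n by (auto simp: negset_def)
  have "red i \<psi> \<phi> \<in> elim i (PiSet D \<Pi> i)" unfolding elim_def using p n by blast
  hence sr: "sat D y (red i \<psi> \<phi>)" using s PiSet_step[OF i] by (auto simp: sat_set_def)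
  define c where "c = wt \<phi> i * (- wt \<psi> i)"
  have c: "c > 0" unfolding c_def by (rule mult_pos_pos) (use wp wn in auto)
  have "lval D (red i \<psi> \<phi>) y = \<bar>wt \<phi> i\<bar> * lval D \<psi> y + \<bar>wt \<psi> i\<bar> * lval D \<phi> y"
    by (rule lval_red) (use wp wn in auto)
  also have "\<dots> = c * (epsv i \<psi> y - epsv i \<phi> y)"
  proof -
    have a1: "\<bar>wt \<phi> i\<bar> = wt \<phi> i" "\<bar>wt \<psi> i\<bar> = - wt \<psi> i" using wp wn by auto
    have l1: "lval D \<phi> y = wt \<phi> i * (y i - epsv i \<phi> y)" by (rule lval_epsv[OF i wp(2)]) (use wp in auto)
    have l2: "lval D \<psi> y = wt \<psi> i * (y i - epsv i \<psi> y)" by (rule lval_epsv[OF i wn(2)]) (use wn in auto)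
    show ?thesis unfolding l1 l2 a1 c_def
      by (simp add: algebra_simps)
  qed
  finally have eq: "lval D (red i \<psi> \<phi>) y = c * (epsv i \<psi> y - epsv i \<phi> y)" .
  have st: "strict (red i \<psi> \<phi>) = (strict \<psi> \<or> strict \<phi>)" by (simp add: red_def)
  show ?thesis using sr c unfolding sat_def eq st
    by (auto split: if_splits simp: zero_le_mult_iff zero_less_mult_iff)
qed

lemma level_bounds:
  assumes i: "1 \<le> i" "i \<le> D" and fin: "finite \<Pi>" and s: "sat_set D y (PiSet D \<Pi> (i - 1))"
  shows "odim (posset i (PiSet D \<Pi> i)) (negset i (PiSet D \<Pi> i)) (\<lambda>\<phi>. epsv i \<phi> y)"
  using finite_PiSet[OF fin] H_lemma[OF i s]
  by (unfold_locales) (auto simp: posset_def negset_def)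

lemma level_sound:
  assumes i: "1 \<le> i" "i \<le> D" and fin: "finite \<Pi>" and s: "sat_set D y (PiSet D \<Pi> (i - 1))"
    and ok: "maxi_ok D \<Pi> i y a r" "mini_ok D \<Pi> i y r (y i)"
  shows "sat_set D y (PiSet D \<Pi> i)"
proof -
  interpret odim "posset i (PiSet D \<Pi> i)" "negset i (PiSet D \<Pi> i)" "\<lambda>\<phi>. epsv i \<phi> y"
    by (rule level_bounds[OF i fin s])
  have b: "\<forall>\<phi>\<in>posset i (PiSet D \<Pi> i). epsv i \<phi> y \<le> y i \<and> (strict \<phi> \<longrightarrow> epsv i \<phi> y < y i)"
          "\<forall>\<psi>\<in>negset i (PiSet D \<Pi> i). y i \<le> epsv i \<psi> y \<and> (strict \<psi> \<longrightarrow> y i < epsv i \<psi> y)"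
    using sound[of a r "y i"] ok unfolding maxi_ok_mx mini_ok_mn by auto
  show ?thesis unfolding sat_set_def
  proof
    fix \<phi> assume ph: "\<phi> \<in> PiSet D \<Pi> i"
    consider "wt \<phi> i = 0" | "wt \<phi> i > 0" | "wt \<phi> i < 0" by linarith
    then show "sat D y \<phi>"
    proof cases
      case 1
      hence "\<phi> \<in> elim i (PiSet D \<Pi> i)" using ph unfolding elim_def by (auto simp: posset_def negset_def)
      then show ?thesis using s PiSet_step[OF i] by (auto simp: sat_set_def)
    next
      case 2
      hence "\<phi> \<in> posset i (PiSet D \<Pi> i)" using ph by (auto simp: posset_def)
      hence "epsv i \<phi> y \<le> y i \<and> (strict \<phi> \<longrightarrow> epsv i \<phi> y < y i)" using b by auto
      then show ?thesis using 2 lval_epsv[OF i ph, of y] unfolding sat_def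
        by (auto simp: zero_le_mult_iff zero_less_mult_iff)
    next
      case 3
      hence "\<phi> \<in> negset i (PiSet D \<Pi> i)" using ph by (auto simp: negset_def)
      hence "y i \<le> epsv i \<phi> y \<and> (strict \<phi> \<longrightarrow> y i < epsv i \<phi> y)" using b by auto
      then show ?thesis using 3 lval_epsv[OF i ph, of y] unfolding sat_def
        by (auto simp: zero_le_mult_iff zero_less_mult_iff)
    qed
  qed
qed

lemma epsv_cong: "(\<And>k. k < i \<Longrightarrow> y k = y' k) \<Longrightarrow> epsv i \<phi> y = epsv i \<phi> y'"
  unfolding epsv_def by (intro arg_cong2[where f="(-)"] arg_cong[where f=uminus] sum.cong) auto

lemma ok_cong:
  assumes "\<And>k. k < i \<Longrightarrow> y k = y' k"
  shows "maxi_ok D \<Pi> i y = maxi_ok D \<Pi> i y'" "mini_ok D \<Pi> i y = mini_ok D \<Pi> i y'"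
proof -
  have "(\<lambda>\<phi>. epsv i \<phi> y) = (\<lambda>\<phi>. epsv i \<phi> y')" using epsv_cong[OF assms] by auto
  then show "maxi_ok D \<Pi> i y = maxi_ok D \<Pi> i y'" "mini_ok D \<Pi> i y = mini_ok D \<Pi> i y'"
    by (auto simp: maxi_ok_mx mini_ok_mn fun_eq_iff)
qed

lemma sound_all:
  assumes fin: "finite \<Pi>" and sf: "satisfiable D \<Pi>" and cl: "is_CL D \<Pi> xt y"
  shows "m \<le> D \<Longrightarrow> sat_set D y (PiSet D \<Pi> m)"
proof (induction m)
  case 0
  then show ?case using base_sat[OF sf] by simp
next
  case (Suc m)
  have i: "1 \<le> Suc m" "Suc m \<le> D" using Suc by auto
  have "Suc m \<in> {1..D}" using i by auto
  then obtain r where "maxi_ok D \<Pi> (Suc m) y (xt (Suc m)) r" "mini_ok D \<Pi> (Suc m) y r (y (Suc m))"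
    using cl unfolding is_CL_def by blast
  with level_sound[OF i fin] Suc show ?case by auto
qed

lemma exists_all:
  assumes fin: "finite \<Pi>" and sf: "satisfiable D \<Pi>"
  shows "m \<le> D \<Longrightarrow> \<exists>y. (\<forall>i. 1 \<le> i \<and> i \<le> m \<longrightarrow> (\<exists>r. maxi_ok D \<Pi> i y (xt i) r \<and> mini_ok D \<Pi> i y r (y i)))
          \<and> sat_set D y (PiSet D \<Pi> m)"
proof (induction m)
  case 0
  then show ?case using base_sat[OF sf] by auto
next
  case (Suc m)
  define i where "i = Suc m"
  have i: "1 \<le> i" "i \<le> D" using Suc by (auto simp: i_def)
  from Suc obtain y where y: "\<forall>j. 1 \<le> j \<and> j \<le> m \<longrightarrow> (\<exists>r. maxi_ok D \<Pi> j y (xt j) r \<and> mini_ok D \<Pi> j y r (y j))"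
    "sat_set D y (PiSet D \<Pi> m)" by auto
  have s: "sat_set D y (PiSet D \<Pi> (i - 1))" using y(2) by (simp add: i_def)
  interpret odim "posset i (PiSet D \<Pi> i)" "negset i (PiSet D \<Pi> i)" "\<lambda>\<phi>. epsv i \<phi> y"
    by (rule level_bounds[OF i fin s])
  obtain r t where rt: "maxi_ok D \<Pi> i y (xt i) r" "mini_ok D \<Pi> i y r t"
    using exists[of "xt i"] unfolding maxi_ok_mx mini_ok_mn by auto
  define y' where "y' = y(i := t)"
  have agree: "\<And>k. k < i \<Longrightarrow> y k = y' k" by (auto simp: y'_def)
  have rt': "maxi_ok D \<Pi> i y' (xt i) r" "mini_ok D \<Pi> i y' r (y' i)"
  proof -
    have "maxi_ok D \<Pi> i y' = maxi_ok D \<Pi> i y" "mini_ok D \<Pi> i y' = mini_ok D \<Pi> i y"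
      using ok_cong[of i y y' D \<Pi>] agree by auto
    moreover have "y' i = t" by (simp add: y'_def)
    ultimately show "maxi_ok D \<Pi> i y' (xt i) r" "mini_ok D \<Pi> i y' r (y' i)" using rt by auto
  qed
  have s': "sat_set D y' (PiSet D \<Pi> (i - 1))" unfolding sat_set_def
  proof
    fix \<phi> assume ph: "\<phi> \<in> PiSet D \<Pi> (i - 1)"
    have "lval D \<phi> y' = lval D \<phi> y" by (rule lval_agree[OF _ ph]) (use i in \<open>auto simp: y'_def\<close>)
    then show "sat D y' \<phi>" using s ph by (auto simp: sat_set_def sat_def)
  qed
  have "sat_set D y' (PiSet D \<Pi> i)" by (rule level_sound[OF i fin s' rt'])
  moreover have "\<forall>j. 1 \<le> j \<and> j \<le> i \<longrightarrow> (\<exists>r. maxi_ok D \<Pi> j y' (xt j) r \<and> mini_ok D \<Pi> j y' r (y' j))"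
  proof (intro allI impI)
    fix j assume j: "1 \<le> j \<and> j \<le> i"
    show "\<exists>r. maxi_ok D \<Pi> j y' (xt j) r \<and> mini_ok D \<Pi> j y' r (y' j)"
    proof (cases "j = i")
      case True then show ?thesis using rt' by auto
    next
      case False
      hence jm: "j \<le> m" using j by (auto simp: i_def)
      have ag: "\<And>k. k < j \<Longrightarrow> y k = y' k" using jm by (auto simp: y'_def i_def)
      have "y' j = y j" using False by (simp add: y'_def)
      moreover obtain r where "maxi_ok D \<Pi> j y (xt j) r" "mini_ok D \<Pi> j y r (y j)" using y(1) jm j by blast
      moreover have "maxi_ok D \<Pi> j y = maxi_ok D \<Pi> j y'" "mini_ok D \<Pi> j y = mini_ok D \<Pi> j y'"
        using ok_cong[of j y y' D \<Pi>] ag by auto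
      ultimately show ?thesis by metis
    qed
  qed
  ultimately show ?case unfolding i_def by blast
qed

theorem theorem1:
  fixes D :: nat and \<Pi> :: "lcons set"
  assumes "finite \<Pi>" and "satisfiable D \<Pi>"
  shows "(\<forall>xt. (\<exists>y. is_CL D \<Pi> xt y) \<and> (\<forall>y. is_CL D \<Pi> xt y \<longrightarrow> sat_set D y \<Pi>))
       \<and> (\<forall>(m :: 'w \<Rightarrow> (nat \<Rightarrow> real)) cl. (\<forall>xt. is_CL D \<Pi> xt (cl xt))
              \<longrightarrow> compliant D \<Pi> (cl \<circ> m))"
proof -
  have snd: "is_CL D \<Pi> xt y \<Longrightarrow> sat_set D y \<Pi>" for xt y
    using sound_all[OF assms, of xt y D] PiSet_D by simp
  have ex: "\<exists>y. is_CL D \<Pi> xt y" for xt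
  proof -
    obtain y where "\<forall>i. 1 \<le> i \<and> i \<le> D \<longrightarrow> (\<exists>r. maxi_ok D \<Pi> i y (xt i) r \<and> mini_ok D \<Pi> i y r (y i))"
      using exists_all[OF assms, of D xt] by auto
    then show ?thesis by (intro exI[of _ y]) (auto simp: is_CL_def)
  qed
  show ?thesis using snd ex unfolding compliant_def by auto
qed

end
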